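(* Let $n\ge 3$ and $i\ge 0$. Then: (a) if $3\cdot 4^i\le n<6\cdot 4^i$, the set $\{2\cdot 4^j-1 : 0\le j\le i\}\cup\{3\cdot 4^i-1\}$, which has cardinality $i+2$, is a string attractor of $\mathbf{p}[0..n-1]$; (b) if $6\cdot 4^i\le n<12\cdot 4^i$, the set $\{4^j-1 : 0\le j\le i+1\}\cup\{6\cdot 4^i-1\}$, which has cardinality $i+3$, is a string attractor of $\mathbf{p}[0..n-1]$.
   Context: $\mathbf{p}=11010001\cdots$ is the infinite binary word, indexed from $0$, with $\mathbf{p}[n]=1$ if $n+1$ is a power of $2$ and $\mathbf{p}[n]=0$ otherwise (so $\mathbf{p}[0]=\mathbf{p}[1]=\mathbf{p}[3]=\mathbf{p}[7]=1$). A string attractor of a finite word $w=w[0..n-1]$ is a set $S\subseteq\{0,\ldots,n-1\}$ such that every nonempty factor $f$ of $w$ has an occurrence $w[p..q]=f$ with $p\le k\le q$ for some $k\in S$. *)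

theory Defs
  imports Main
begin

definition pword :: "nat \<Rightarrow> nat" where
  "pword n = (if (\<exists>k. n + 1 = 2 ^ k) then 1 else 0)"

text \<open>A finite word of length n is represented by a function w (only positions < n matter).\<close>
definition string_attractor :: "(nat \<Rightarrow> 'a) \<Rightarrow> nat \<Rightarrow> nat set \<Rightarrow> bool" where
  "string_attractor w n S \<longleftrightarrow> S \<subseteq> {0..<n} \<and>
     (\<forall>a b. a \<le> b \<and> b < n \<longrightarrow>
        (\<exists>a'. a' + (b - a) < n \<and> (\<forall>t\<le>b - a. w (a' + t) = w (a + t)) \<and>
              (\<exists>k\<in>S. a' \<le> k \<and> k \<le> a' + (b - a))))"

end

theory Submission
  imports Defs
begin

lemma pw_pow: "pword (2^k - 1) = 1"
  unfolding pword_def by auto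

lemma pw_win:
  assumes "2^j = (g::nat)" "g < x+1" "x+1 < 4*g"
  shows "pword x = (if x+1 = 2*g then 1 else 0)"
proof (cases "\<exists>m. x + 1 = 2^m")
  case True
  then obtain m where m: "x+1 = 2^m" by blast
  have "j < m"
  proof (rule ccontr)
    assume "\<not> j < m" then have "(2::nat)^m \<le> 2^j" by (intro power_increasing) auto
    then show False using assms m by simp
  qed
  moreover have "m < j + 2"
  proof (rule ccontr)
    assume "\<not> m < j+2" then have "(2::nat)^(j+2) \<le> 2^m" by (intro power_increasing) auto
    then show False using assms m by (simp add: power_add)
  qed
  ultimately have "m = j + 1" by simp
  then have "x + 1 = 2 * g" using m assms by simp
  then show ?thesis unfolding pword_def using True by simp
next
  case False
  have "x + 1 \<noteq> 2 * g" using False assms(1) by (metis power_Suc)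
  then show ?thesis unfolding pword_def using False by simp
qed

lemma pw01: "pword x = 0 \<or> pword x = 1"
  unfolding pword_def by auto

lemma main:
  fixes n q :: nat and S :: "nat set"
  assumes q: "q \<ge> 1" and n1: "3 * 2^(q-1) \<le> n" and n2: "n < 6 * 2^(q-1)"
    and S1: "\<forall>k \<le> q. even (q - k) \<longrightarrow> 2^k - 1 \<in> S"
    and S2: "3 * 2^(q-1) - 1 \<in> S" and S3: "S \<subseteq> {0..<n}"
  shows "string_attractor pword n S"
  unfolding string_attractor_def
proof (intro conjI S3 allI impI)
  define h :: nat where "h = 2^(q-1)"
  have hq: "2^q = 2*h" unfolding h_def using q by (cases q) auto
  have hq1: "2^(q+1) = 4*h" using hq by simp
  have hq2: "2^(q+2) = 8*h" using hq by simp
  have h1: "h \<ge> 1" unfolding h_def by simp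
  have n1': "3*h \<le> n" and n2': "n < 6*h" using n1 n2 h_def by auto
  have zS: "3*h - 1 \<in> S" using S2 h_def by simp
  have qS: "2*h - 1 \<in> S" proof -
    have "(2::nat)^q - 1 \<in> S" using S1 by simp
    then show ?thesis using hq by simp
  qed
  fix a b assume ab: "a \<le> b \<and> b < n"
  define d where "d = b - a"
  let ?G = "\<exists>a'. a' + d < n \<and> (\<forall>t\<le>d. pword (a' + t) = pword (a + t)) \<and>
              (\<exists>k\<in>S. a' \<le> k \<and> k \<le> a' + d)"
  have caseA: "?G" if "s \<in> S" "a \<le> s" "s \<le> b" for s
    by (rule exI[of _ a]) (use that ab d_def in auto)
  have "?G"
  proof (cases "\<forall>t\<le>d. pword (a+t) = 0")
    case True
    have hz: "pword c = 0" if "a \<le> c" "c \<le> b" for c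
      using True[rule_format, of "c - a"] that d_def by simp
    define R where "R = min (n-1) (4*h-2)"
    have p4: "pword (4*h-1) = 1" using pw_pow[of "q+1"] hq1 by simp
    have p2: "pword (2*h-1) = 1" using pw_pow[of "q"] hq by simp
    have p1: "pword (h-1) = 1" using pw_pow[of "q-1"] h_def by simp
    have bound: "d + 2*h \<le> R"
    proof (cases "a \<ge> 4*h")
      case True then show ?thesis using ab d_def n2' R_def by auto
    next
      case False
      have b4: "b < 4*h - 1"
      proof (rule ccontr)
        assume "\<not> b < 4*h-1"
        then have "pword (4*h-1) = 0" using hz[of "4*h-1"] False by simp
        then show False using p4 by simp
      qed
      show ?thesis
      proof (cases "a \<ge> 2*h")
        case True then show ?thesis using ab d_def b4 R_def by auto
      next
        case False
        have b2: "b < 2*h - 1"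
        proof (rule ccontr)
          assume "\<not> b < 2*h-1"
          then have "pword (2*h-1) = 0" using hz[of "2*h-1"] False by simp
          then show False using p2 by simp
        qed
        show ?thesis
        proof (cases "a \<ge> h")
          case True then show ?thesis using ab d_def b2 R_def n1' h1 by auto
        next
          case False
          have b1: "b < h - 1"
          proof (rule ccontr)
            assume "\<not> b < h-1"
            then have "pword (h-1) = 0" using hz[of "h-1"] False by simp
            then show False using p1 by simp
          qed
          then show ?thesis using ab d_def R_def n1' h1 by auto
        qed
      qed
    qed
    define a' where "a' = min (3*h-1) (R - d)"
    have RR: "3*h - 1 \<le> R" "R < n" "R \<le> 4*h-2" using R_def n1' h1 by auto
    have w1: "a' + d \<le> R" "2*h \<le> a'" "a' \<le> 3*h-1" "3*h-1 \<le> a'+d"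
    proof -
      show "a' + d \<le> R" using bound a'_def by linarith
      show "2*h \<le> a'" using bound a'_def RR h1 by linarith
      show "a' \<le> 3*h-1" using a'_def by linarith
      show "3*h-1 \<le> a'+d" using a'_def RR bound by linarith
    qed
    have zz: "pword (a'+t) = 0" if "t \<le> d" for t
    proof -
      have "2^(q-1) = h" using h_def by simp
      moreover have "h < a'+t+1" "a'+t+1 < 4*h" using w1 that RR h1 by linarith+
      ultimately have "pword (a'+t) = (if a'+t+1 = 2*h then 1 else 0)" by (rule pw_win)
      then show ?thesis using w1 by simp
    qed
    show ?thesis
    proof (intro exI[of _ a'] conjI)
      show "a' + d < n" using w1 RR by linarith
      show "\<forall>t\<le>d. pword (a'+t) = pword (a+t)" using zz True by simp
      show "\<exists>k\<in>S. a' \<le> k \<and> k \<le> a'+d" using zS w1 by blast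
    qed
  next
    case False
    then obtain t where t: "t \<le> d" "pword (a+t) \<noteq> 0" by blast
    define c where "c = a + t"
    have "pword c = 1" using t pw01[of c] c_def by simp
    then have "\<exists>k. c + 1 = 2^k" unfolding pword_def by (simp split: if_splits)
    then obtain k where k: "c + 1 = 2^k" by blast
    have cab: "a \<le> c" "c \<le> b" using c_def t d_def ab by auto
    have "k < q + 2"
    proof (rule ccontr)
      assume "\<not> k < q+2" then have "(2::nat)^(q+2) \<le> 2^k" by (intro power_increasing) auto
      then show False using k hq2 cab ab n2' by simp
    qed
    have ck: "c = 2^k - 1" using k by simp
    show ?thesis
    proof (cases "k \<le> q \<and> even (q - k)")
      case True
      then have "2^k - 1 \<in> S" using S1[rule_format, of k] by blast
      then have "c \<in> S" using ck by simp
      then show ?thesis using cab by (rule caseA)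
    next
      case nk: False
      show ?thesis
      proof (cases "k = q + 1")
        case True
        then have c4: "c = 4*h-1" using ck hq1 by simp
        show ?thesis
        proof (cases "a \<le> 3*h-1")
          case True then show ?thesis using caseA[OF zS] cab c4 h1 by simp
        next
          case False
          have eq: "pword (a - 2*h + t) = pword (a + t)" if "t \<le> d" for t
          proof -
            have x1: "a + t \<ge> 3*h" "a + t \<le> 6*h - 2" "a \<ge> 3*h" using False that d_def ab n2' by auto
            have "2^q = 2*h" using hq .
            moreover have "2*h < a+t+1" "a+t+1 < 4*(2*h)" using x1 h1 by auto
            ultimately have A: "pword (a+t) = (if a+t+1 = 2*(2*h) then 1 else 0)" by (rule pw_win)
            have "2^(q-1) = h" using h_def by simp
            moreover have "h < a-2*h+t+1" "a-2*h+t+1 < 4*h" using x1 h1 by auto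
            ultimately have B: "pword (a-2*h+t) = (if a-2*h+t+1 = 2*h then 1 else 0)" by (rule pw_win)
            show ?thesis using A B x1 by auto
          qed
          show ?thesis
          proof (intro exI[of _ "a - 2*h"] conjI)
            show "a - 2*h + d < n" using ab d_def by linarith
            show "\<forall>t\<le>d. pword (a - 2*h + t) = pword (a + t)" using eq by simp
            show "\<exists>s\<in>S. a - 2*h \<le> s \<and> s \<le> a - 2*h + d"
              using qS cab c4 d_def False h1 by (intro bexI[of _ "2*h-1"]) auto
          qed
        qed
      next
        case False
        then have kle: "k \<le> q" using \<open>k < q+2\<close> by simp
        then have ko: "odd (q - k)" using nk by simp
        then have kq0: "k < q" using kle by (cases "k = q") auto
        have kq1: "even (q - (k+1))" using ko kq0 by presburger
        have kq: "k < q" "even (q - (k+1))" "k + 1 \<le> q" using kq0 kq1 by auto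
        have S'': "2^(k+1) - 1 \<in> S" using S1[rule_format, of "k+1"] kq by blast
        show ?thesis
        proof (cases "b \<ge> 2^(k+1) - 1")
          case True
          have "c \<le> 2^(k+1) - 1" using ck by simp
          then show ?thesis using caseA[OF S''] True cab by simp
        next
          case bk: False
          show ?thesis
          proof (cases "k = 0")
            case True
            then have "a = 0" "b = 0" using ck cab bk by auto
            have p0: "pword 0 = 1" "pword 1 = 1" using pw_pow[of 0] pw_pow[of 1] by simp_all
            have S1': "1 \<in> S" using S'' True by simp
            show ?thesis
            proof (intro exI[of _ 1] conjI)
              show "1 + d < n" using \<open>a = 0\<close> \<open>b = 0\<close> d_def n1' h1 by simp
              show "\<forall>t\<le>d. pword (1 + t) = pword (a + t)" using \<open>a = 0\<close> \<open>b = 0\<close> d_def p0 by simp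
              show "\<exists>s\<in>S. 1 \<le> s \<and> s \<le> 1 + d" using S1' by auto
            qed
          next
            case False
            define g :: nat where "g = 2^(k-1)"
            have gk: "2^k = 2*g" unfolding g_def using False
              by (cases k) auto
            have "even (q - (k-1))" using ko kq0 False by presburger
            moreover have "k - 1 \<le> q" using kq by simp
            ultimately have S3': "2^(k-1) - 1 \<in> S" using S1[rule_format, of "k-1"] by blast
            show ?thesis
            proof (cases "a \<le> g - 1")
              case True
              have "g - 1 \<le> c" using ck gk by simp
              then show ?thesis using caseA[OF S3'] True cab g_def by simp
            next
              case ag: False
              have "(2::nat)^k \<le> 2^(q-1)" using kq by (intro power_increasing) auto
              then have gh: "2*g \<le> h" using gk h_def by simp
              have b4: "b \<le> 4*g - 2" using bk gk by simp
              have ag': "g \<le> a" using ag by simp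
              have g1: "g \<ge> 1" using g_def by simp
              have eq: "pword (a + 2*g + t) = pword (a + t)" if "t \<le> d" for t
              proof -
                have x1: "g \<le> a + t" "a + t \<le> 4*g - 2" "g \<ge> 1" using ag' that d_def ab b4 g1 by auto
                have "2^(k-1) = g" using g_def by simp
                moreover have "g < a+t+1" "a+t+1 < 4*g" using x1 by auto
                ultimately have A: "pword (a+t) = (if a+t+1 = 2*g then 1 else 0)" by (rule pw_win)
                have "2^k = 2*g" using gk .
                moreover have "2*g < a+2*g+t+1" "a+2*g+t+1 < 4*(2*g)" using x1 by auto
                ultimately have B: "pword (a+2*g+t) = (if a+2*g+t+1 = 2*(2*g) then 1 else 0)" by (rule pw_win)
                show ?thesis using A B by auto
              qed
              have ck': "c = 2*g - 1" using ck gk by simp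
              show ?thesis
              proof (intro exI[of _ "a + 2*g"] conjI)
                show "a + 2*g + d < n" using b4 d_def ab gh n1' g1 by linarith
                show "\<forall>t\<le>d. pword (a + 2*g + t) = pword (a + t)" using eq by simp
                have "2^(k+1) - 1 = 4*g - 1" using gk by simp
                then show "\<exists>s\<in>S. a + 2*g \<le> s \<and> s \<le> a + 2*g + d"
                  using S'' cab ck' d_def g1 by (intro bexI[of _ "4*g-1"]) auto
              qed
            qed
          qed
        qed
      qed
    qed
  qed
  then show "\<exists>a'. a' + (b - a) < n \<and> (\<forall>t\<le>b - a. pword (a' + t) = pword (a + t)) \<and>
              (\<exists>k\<in>S. a' \<le> k \<and> k \<le> a' + (b - a))" using d_def by simp
qed

lemma pow4: "(2::nat)^(2*j) = 4^j"
  by (simp add: power_mult)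

lemma mod4: "(4::nat)^j mod 3 = 1"
proof -
  have "(4::nat)^j mod 3 = (4 mod 3)^j mod 3" by (rule power_mod[symmetric])
  then show ?thesis by simp
qed

lemma card_ins: "finite A \<Longrightarrow> x \<notin> A \<Longrightarrow> card (A \<union> {x}) = card A + 1"
  by simp

theorem theorem8:
  fixes n i :: nat
  assumes "n \<ge> 3"
  shows "(3 * 4 ^ i \<le> n \<and> n < 6 * 4 ^ i \<longrightarrow>
            card ({(2::nat) * 4 ^ j - 1 | j. j \<le> i} \<union> {3 * 4 ^ i - 1}) = i + 2 \<and>
            string_attractor pword n ({(2::nat) * 4 ^ j - 1 | j. j \<le> i} \<union> {3 * 4 ^ i - 1}))
       \<and> (6 * 4 ^ i \<le> n \<and> n < 12 * 4 ^ i \<longrightarrow>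
            card ({(4::nat) ^ j - 1 | j. j \<le> i + 1} \<union> {6 * 4 ^ i - 1}) = i + 3 \<and>
            string_attractor pword n ({(4::nat) ^ j - 1 | j. j \<le> i + 1} \<union> {6 * 4 ^ i - 1}))"
proof (intro conjI impI)
  have p4pos: "(4::nat)^j \<ge> 1" for j by simp
  have mono4: "(4::nat)^j \<le> 4^i" if "j \<le> i" for j i using that by (intro power_increasing) auto
  have eqA: "{(2::nat) * 4 ^ j - 1 | j. j \<le> i} = (\<lambda>j. 2 * 4^j - 1) ` {..i}" by auto
  have eqB: "{(4::nat) ^ j - 1 | j. j \<le> i + 1} = (\<lambda>j. 4^j - 1) ` {..i+1}" by auto
  have injA: "inj_on (\<lambda>j. (2::nat) * 4^j - 1) {..i}"
  proof (rule inj_onI)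
    fix x y assume "(2::nat) * 4^x - 1 = 2 * 4^y - 1"
    then have "(4::nat)^x = 4^y" using p4pos[of x] p4pos[of y] by linarith
    then show "x = y" by simp
  qed
  have injB: "inj_on (\<lambda>j. (4::nat)^j - 1) {..i+1}"
  proof (rule inj_onI)
    fix x y assume "(4::nat)^x - 1 = 4^y - 1"
    then have "(4::nat)^x = 4^y" using p4pos[of x] p4pos[of y] by linarith
    then show "x = y" by simp
  qed
  {
    assume n: "3 * 4 ^ i \<le> n \<and> n < 6 * 4 ^ i"
    have nin: "3 * 4^i - 1 \<notin> (\<lambda>j. (2::nat) * 4^j - 1) ` {..i}"
    proof
      assume "3 * 4^i - 1 \<in> (\<lambda>j. (2::nat) * 4^j - 1) ` {..i}"
      then obtain j where "(3::nat) * 4^i - 1 = 2 * 4^j - 1" by auto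
      then have "(3::nat) * 4^i = 2 * 4^j" using p4pos[of i] p4pos[of j] by linarith
      then have "((3::nat) * 4^i) mod 3 = (2 * 4^j) mod 3" by simp
      moreover have "((2::nat) * 4^j) mod 3 = 2" using mod4[of j] by (simp add: mod_mult_right_eq[symmetric])
      ultimately show False by simp
    qed
    show "card ({(2::nat) * 4 ^ j - 1 | j. j \<le> i} \<union> {3 * 4 ^ i - 1}) = i + 2"
      unfolding eqA using card_ins[OF _ nin] card_image[OF injA] by simp
    show "string_attractor pword n ({(2::nat) * 4 ^ j - 1 | j. j \<le> i} \<union> {3 * 4 ^ i - 1})"
    proof (rule main[where q = "2*i+1"])
      have e: "(2::nat)^(2*i+1-1) = 4^i" using pow4 by simp
      show "1 \<le> 2*i+1" by simp
      show "3 * 2^(2*i+1-1) \<le> n" "n < 6 * 2^(2*i+1-1)" using n e by auto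
      show "3 * 2^(2*i+1-1) - 1 \<in> {(2::nat) * 4 ^ j - 1 | j. j \<le> i} \<union> {3 * 4 ^ i - 1}"
        using e by simp
      show "\<forall>k\<le>2*i+1. even (2*i+1-k) \<longrightarrow> 2^k - 1 \<in> {(2::nat) * 4 ^ j - 1 | j. j \<le> i} \<union> {3 * 4 ^ i - 1}"
      proof (intro allI impI)
        fix k assume k: "k \<le> 2*i+1" "even (2*i+1-k)"
        then have "odd k" by presburger
        then obtain j where j: "k = 2*j+1" using oddE by blast
        then have "j \<le> i" using k by simp
        moreover have "(2::nat)^k = 2*4^j" using j pow4[of j] by simp
        ultimately show "2^k - 1 \<in> {(2::nat) * 4 ^ j - 1 | j. j \<le> i} \<union> {3 * 4 ^ i - 1}" by auto
      qed
      show "{(2::nat) * 4 ^ j - 1 | j. j \<le> i} \<union> {3 * 4 ^ i - 1} \<subseteq> {0..<n}"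
      proof
        fix x assume "x \<in> {(2::nat) * 4 ^ j - 1 | j. j \<le> i} \<union> {3 * 4 ^ i - 1}"
        then consider (a) j where "j \<le> i" "x = 2*4^j - 1" | (b) "x = 3*4^i - 1" by auto
        then show "x \<in> {0..<n}"
        proof cases
          case a
          have "(4::nat)^j \<le> 4^i" using mono4 a(1) by blast
          then have "x < n" using a(2) n p4pos[of i] by linarith
          then show ?thesis by simp
        next
          case b then show ?thesis using n p4pos[of i] by auto
        qed
      qed
    qed
  }
  {
    assume n: "6 * 4 ^ i \<le> n \<and> n < 12 * 4 ^ i"
    have nin: "6 * 4^i - 1 \<notin> (\<lambda>j. (4::nat)^j - 1) ` {..i+1}"
    proof
      assume "6 * 4^i - 1 \<in> (\<lambda>j. (4::nat)^j - 1) ` {..i+1}"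
      then obtain j where "(6::nat) * 4^i - 1 = 4^j - 1" by auto
      then have "(6::nat) * 4^i = 4^j" using p4pos[of i] p4pos[of j] by linarith
      then have "((6::nat) * 4^i) mod 3 = (4^j) mod 3" by simp
      then show False using mod4[of j] by simp
    qed
    show "card ({(4::nat) ^ j - 1 | j. j \<le> i + 1} \<union> {6 * 4 ^ i - 1}) = i + 3"
      unfolding eqB using card_ins[OF _ nin] card_image[OF injB] by simp
    show "string_attractor pword n ({(4::nat) ^ j - 1 | j. j \<le> i + 1} \<union> {6 * 4 ^ i - 1})"
    proof (rule main[where q = "2*i+2"])
      have e: "(2::nat)^(2*i+2-1) = 2*4^i" using pow4[of i] by simp
      show "1 \<le> 2*i+2" by simp
      show "3 * 2^(2*i+2-1) \<le> n" "n < 6 * 2^(2*i+2-1)" using n e by auto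
      show "3 * 2^(2*i+2-1) - 1 \<in> {(4::nat) ^ j - 1 | j. j \<le> i + 1} \<union> {6 * 4 ^ i - 1}"
        using e by simp
      show "\<forall>k\<le>2*i+2. even (2*i+2-k) \<longrightarrow> 2^k - 1 \<in> {(4::nat) ^ j - 1 | j. j \<le> i + 1} \<union> {6 * 4 ^ i - 1}"
      proof (intro allI impI)
        fix k assume k: "k \<le> 2*i+2" "even (2*i+2-k)"
        then have "even k" by presburger
        then obtain j where j: "k = 2*j" using evenE by blast
        then have "j \<le> i+1" using k by simp
        moreover have "(2::nat)^k = 4^j" using j pow4[of j] by simp
        ultimately show "2^k - 1 \<in> {(4::nat) ^ j - 1 | j. j \<le> i + 1} \<union> {6 * 4 ^ i - 1}" by auto
      qed
      show "{(4::nat) ^ j - 1 | j. j \<le> i + 1} \<union> {6 * 4 ^ i - 1} \<subseteq> {0..<n}"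
      proof
        fix x assume "x \<in> {(4::nat) ^ j - 1 | j. j \<le> i + 1} \<union> {6 * 4 ^ i - 1}"
        then consider (a) j where "j \<le> i+1" "x = 4^j - 1" | (b) "x = 6*4^i - 1" by auto
        then show "x \<in> {0..<n}"
        proof cases
          case a
          have "(4::nat)^j \<le> 4^(i+1)" using mono4 a(1) by blast
          moreover have "(4::nat)^(i+1) = 4 * 4^i" by simp
          ultimately have "x < n" using a(2) n p4pos[of i] by linarith
          then show ?thesis by simp
        next
          case b then show ?thesis using n p4pos[of i] by auto
        qed
      qed
    qed
  }
qed

end
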